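(* Assume $W_c$ satisfies Assumption 1. Then for all integers $k,n\ge2$, \[ \log P_j(k,n)\le\inf_{s\in(0,1)}\Big[-nsR+(n-1)\,U\big[W_s,W_c,\downarrow;\tfrac{k-1}{n-1}\big](s)+\overline\delta_{W_s}(s)+\overline\delta_{W_c}(s)\Big]. \]
   Context: Setup. $\mathcal M$ is a finite set and $W_s=\{W_s(m|m')\}$ an irreducible aperiodic transition matrix on $\mathcal M$; the message $M^k=(M_1,\dots,M_k)$ has law $P_{M^k}(m^k)=P_{M_1}(m_1)\prod_{i=2}^kW_s(m_i|m_{i-1})$ for some initial distribution $P_{M_1}$. $\mathcal X$ is a finite abelian group, $\mathcal Z$ a finite set, $W_c=\{W_c(x,z|x',z')\}$ an irreducible aperiodic transition matrix on $\mathcal X\times\mathcal Z$, and $(X^n,Z^n)$ has law $P_{X^nZ^n}(x^n,z^n)=P_{X_1Z_1}(x_1,z_1)\prod_{i=2}^nW_c(x_i,z_i|x_{i-1},z_{i-1})$ for an initial distribution $P_{X_1Z_1}$ with marginal $P_{Z_1}$. The channel maps input $\tilde x^n\in\mathcal X^n$ to output $(x^n,z^n)$ with probability $P_{X^nZ^n}(x^n-\tilde x^n,z^n)$. A code is $(\mathsf e,\mathsf d)$ with $\mathsf e:\mathcal M^k\to\mathcal X^n$, $\mathsf d:(\mathcal X\times\mathcal Z)^n\to\mathcal M^k$; $P_j(k,n)$ is the infimum over codes of $\sum_{m^k}P_{M^k}(m^k)\Pr[\mathsf d(\text{output})\ne m^k\mid\text{input }\mathsf e(m^k)]$. $R:=\log|\mathcal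 X|$. Assumption 1: $\sum_xW_c(x,z|x',z')$ does not depend on $x'$; call it $W_{c,Z}(z|z')$. Perron–Frobenius notation: entrywise powers $a^t$ of transition probabilities are taken to be $0$ when $a=0$. For a nonnegative irreducible matrix $A$ indexed by a finite set, $\lambda(A)$ is its Perron–Frobenius eigenvalue and $v_A$ the positive vector with $\sum_iv_A(i)A(i,j)=\lambda(A)v_A(j)$ for all $j$, normalized so $\min_iv_A(i)=1$. Quantities. $A^s_\theta(m,m'):=W_s(m|m')^{1-\theta}$; $A^c_\theta((x,z),(x',z')):=W_c(x,z|x',z')^{1-\theta}W_{c,Z}(z|z')^{\theta}$. $\theta H^{W_s}_{1-\theta}(M):=\log\lambda(A^s_\theta)$, $\theta H^{W_c,\downarrow}_{1-\theta}(X|Z):=\log\lambda(A^c_\theta)$. For $r>0$: $U[W_s,W_c,\downarrow;r](\theta):=r\theta H^{W_s}_{1-\theta}(M)+\theta H^{W_c,\downarrow}_{1-\theta}(X|Z)$. With $w^s_\theta(m):=P_{M_1}(m)^{1-\theta}$ and $w^c_\theta(x,z):=P_{X_1Z_1}(x,z)^{1-\theta}P_{Z_1}(z)^{\theta}$: $\overline\delta_{W_s}(\theta):=\log(v_{A^s_\theta}\cdot w^s_\theta)$, $\overline\delta_{W_c}(\theta):=\log(v_{A^c_\theta}\cdot w^c_\theta)$. *)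

theory Defs
  imports "HOL-Analysis.Analysis"
begin

(* Matrices on a finite index set are functions A :: 'a => 'a => real, A i j = A(i,j).
   A transition matrix W is stored as W m m' = W(m|m') (probability of moving from m' to m). *)

fun mpow :: "('a::finite \<Rightarrow> 'a \<Rightarrow> real) \<Rightarrow> nat \<Rightarrow> 'a \<Rightarrow> 'a \<Rightarrow> real" where
  "mpow A 0 = (\<lambda>i j. if i = j then 1 else 0)"
| "mpow A (Suc t) = (\<lambda>i j. \<Sum>l\<in>UNIV. mpow A t i l * A l j)"

definition transition_matrix :: "('a::finite \<Rightarrow> 'a \<Rightarrow> real) \<Rightarrow> bool" where
  "transition_matrix W \<longleftrightarrow> (\<forall>m m'. 0 \<le> W m m') \<and> (\<forall>m'. (\<Sum>m\<in>UNIV. W m m') = 1)"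

definition irreducible_mat :: "('a::finite \<Rightarrow> 'a \<Rightarrow> real) \<Rightarrow> bool" where
  "irreducible_mat A \<longleftrightarrow> (\<forall>i j. \<exists>t>0. mpow A t i j > 0)"

definition aperiodic_mat :: "('a::finite \<Rightarrow> 'a \<Rightarrow> real) \<Rightarrow> bool" where
  "aperiodic_mat A \<longleftrightarrow> (\<forall>i. Gcd {t. 0 < t \<and> mpow A t i i > 0} = (1::nat))"

definition prob_dist :: "('a::finite \<Rightarrow> real) \<Rightarrow> bool" where
  "prob_dist P \<longleftrightarrow> (\<forall>a. 0 \<le> P a) \<and> (\<Sum>a\<in>UNIV. P a) = 1"

definition pf_eigval :: "('a::finite \<Rightarrow> 'a \<Rightarrow> real) \<Rightarrow> real" where
  "pf_eigval A = (THE r. \<exists>v. (\<forall>i. 0 < v i) \<and> (\<forall>j. (\<Sum>i\<in>UNIV. v i * A i j) = r * v j))"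

definition pf_vec :: "('a::finite \<Rightarrow> 'a \<Rightarrow> real) \<Rightarrow> 'a \<Rightarrow> real" where
  "pf_vec A = (THE v. (\<forall>i. 0 < v i) \<and> (\<forall>j. (\<Sum>i\<in>UNIV. v i * A i j) = pf_eigval A * v j)
                      \<and> Min (range v) = 1)"

fun chain_prob :: "('a \<Rightarrow> 'a \<Rightarrow> real) \<Rightarrow> 'a \<Rightarrow> 'a list \<Rightarrow> real" where
  "chain_prob W prev [] = 1"
| "chain_prob W prev (a # as) = W a prev * chain_prob W a as"

fun markov_prob :: "('a \<Rightarrow> real) \<Rightarrow> ('a \<Rightarrow> 'a \<Rightarrow> real) \<Rightarrow> 'a list \<Rightarrow> real" where
  "markov_prob P1 W [] = 1"
| "markov_prob P1 W (a # as) = P1 a * chain_prob W a as"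

definition code_error ::
  "('m::finite \<Rightarrow> real) \<Rightarrow> ('m \<Rightarrow> 'm \<Rightarrow> real) \<Rightarrow>
   (('x::{ab_group_add,finite} \<times> 'z::finite) \<Rightarrow> real) \<Rightarrow> ('x \<times> 'z \<Rightarrow> 'x \<times> 'z \<Rightarrow> real) \<Rightarrow>
   nat \<Rightarrow> nat \<Rightarrow> ('m list \<Rightarrow> 'x list) \<Rightarrow> (('x \<times> 'z) list \<Rightarrow> 'm list) \<Rightarrow> real" where
  "code_error PM1 Ws PXZ1 Wc k n e d =
     (\<Sum>ms\<in>{ms. length ms = k}. markov_prob PM1 Ws ms *
        (\<Sum>ys\<in>{ys. length ys = n}.
           (if d ys \<noteq> ms then
              markov_prob PXZ1 Wc (map2 (\<lambda>(x, z) xt. (x - xt, z)) ys (e ms)) else 0)))"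

definition Pj ::
  "('m::finite \<Rightarrow> real) \<Rightarrow> ('m \<Rightarrow> 'm \<Rightarrow> real) \<Rightarrow>
   (('x::{ab_group_add,finite} \<times> 'z::finite) \<Rightarrow> real) \<Rightarrow> ('x \<times> 'z \<Rightarrow> 'x \<times> 'z \<Rightarrow> real) \<Rightarrow>
   nat \<Rightarrow> nat \<Rightarrow> real" where
  "Pj PM1 Ws PXZ1 Wc k n =
     Inf {code_error PM1 Ws PXZ1 Wc k n e d | e d.
            \<forall>ms. length ms = k \<longrightarrow> length (e ms) = n}"

definition assumption1 :: "('x::{ab_group_add,finite} \<times> 'z::finite \<Rightarrow> 'x \<times> 'z \<Rightarrow> real) \<Rightarrow> bool" where
  "assumption1 Wc \<longleftrightarrow> (\<forall>z z' x1 x2. (\<Sum>x\<in>UNIV. Wc (x, z) (x1, z')) = (\<Sum>x\<in>UNIV. Wc (x, z) (x2, z')))"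

(* W_{c,Z}(z|z'), well defined under Assumption 1 (x' = 0 as representative) *)
definition WcZ :: "('x::{ab_group_add,finite} \<times> 'z::finite \<Rightarrow> 'x \<times> 'z \<Rightarrow> real) \<Rightarrow> 'z \<Rightarrow> 'z \<Rightarrow> real" where
  "WcZ Wc z z' = (\<Sum>x\<in>UNIV. Wc (x, z) (0, z'))"

definition As :: "('m::finite \<Rightarrow> 'm \<Rightarrow> real) \<Rightarrow> real \<Rightarrow> 'm \<Rightarrow> 'm \<Rightarrow> real" where
  "As Ws \<theta> m m' = Ws m m' powr (1 - \<theta>)"

definition Ac :: "('x::{ab_group_add,finite} \<times> 'z::finite \<Rightarrow> 'x \<times> 'z \<Rightarrow> real) \<Rightarrow> real \<Rightarrow>
                  'x \<times> 'z \<Rightarrow> 'x \<times> 'z \<Rightarrow> real" where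
  "Ac Wc \<theta> a b = Wc a b powr (1 - \<theta>) * WcZ Wc (snd a) (snd b) powr \<theta>"

(* theta * H^{W_s}_{1-theta}(M) *)
definition thetaH_s :: "('m::finite \<Rightarrow> 'm \<Rightarrow> real) \<Rightarrow> real \<Rightarrow> real" where
  "thetaH_s Ws \<theta> = ln (pf_eigval (As Ws \<theta>))"

(* theta * H^{W_c,down}_{1-theta}(X|Z) *)
definition thetaH_c :: "('x::{ab_group_add,finite} \<times> 'z::finite \<Rightarrow> 'x \<times> 'z \<Rightarrow> real) \<Rightarrow> real \<Rightarrow> real" where
  "thetaH_c Wc \<theta> = ln (pf_eigval (Ac Wc \<theta>))"

definition U_fn :: "('m::finite \<Rightarrow> 'm \<Rightarrow> real) \<Rightarrow> ('x::{ab_group_add,finite} \<times> 'z::finite \<Rightarrow> 'x \<times> 'z \<Rightarrow> real)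
                    \<Rightarrow> real \<Rightarrow> real \<Rightarrow> real" where
  "U_fn Ws Wc r \<theta> = r * thetaH_s Ws \<theta> + thetaH_c Wc \<theta>"

definition delta_s :: "('m::finite \<Rightarrow> real) \<Rightarrow> ('m \<Rightarrow> 'm \<Rightarrow> real) \<Rightarrow> real \<Rightarrow> real" where
  "delta_s PM1 Ws \<theta> = ln (\<Sum>m\<in>UNIV. pf_vec (As Ws \<theta>) m * PM1 m powr (1 - \<theta>))"

definition PZ1 :: "('x::finite \<times> 'z \<Rightarrow> real) \<Rightarrow> 'z \<Rightarrow> real" where
  "PZ1 PXZ1 z = (\<Sum>x\<in>UNIV. PXZ1 (x, z))"

definition delta_c :: "(('x::{ab_group_add,finite} \<times> 'z::finite) \<Rightarrow> real) \<Rightarrow>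
                       ('x \<times> 'z \<Rightarrow> 'x \<times> 'z \<Rightarrow> real) \<Rightarrow> real \<Rightarrow> real" where
  "delta_c PXZ1 Wc \<theta> = ln (\<Sum>a\<in>UNIV. pf_vec (Ac Wc \<theta>) a *
                              (PXZ1 a powr (1 - \<theta>) * PZ1 PXZ1 (snd a) powr \<theta>))"

definition elog :: "real \<Rightarrow> ereal" where
  "elog x = (if x = 0 then -\<infinity> else ereal (ln x))"

end

theory Submission
  imports Defs
begin


lemma mpow_nonneg: "(\<forall>i j. 0 \<le> A i j) \<Longrightarrow> 0 \<le> mpow A t i j"
  by (induction t arbitrary: i j) (auto intro!: sum_nonneg)

lemma zero_propagate:
  fixes A :: "'a::finite \<Rightarrow> 'a \<Rightarrow> real"
  assumes nn: "\<forall>i j. 0 \<le> A i j" and irr: "irreducible_mat A"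
    and u: "\<forall>i. 0 \<le> u i" and eig: "\<forall>j. (\<Sum>i\<in>UNIV. u i * A i j) = r * u j"
    and z: "u j0 = 0"
  shows "u i = 0"
proof -
  have step: "u i = 0" if "u j = 0" "A i j > 0" for i j
  proof -
    have "(\<Sum>i\<in>UNIV. u i * A i j) = 0" using eig that by simp
    moreover have "\<forall>i\<in>UNIV. 0 \<le> u i * A i j" using u nn by simp
    ultimately have "u i * A i j = 0" using sum_nonneg_eq_0_iff[of UNIV "\<lambda>i. u i * A i j"] by simp
    thus ?thesis using that by simp
  qed
  have gen: "\<forall>i j. mpow A t i j > 0 \<longrightarrow> u j = 0 \<longrightarrow> u i = 0" for t
  proof (induction t)
    case 0 then show ?case by simp
  next
    case (Suc t)
    show ?case
    proof (intro allI impI)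
      fix i j assume a: "mpow A (Suc t) i j > 0" "u j = 0"
      then have "(\<Sum>l\<in>UNIV. mpow A t i l * A l j) > 0" by simp
      then obtain l where l: "mpow A t i l * A l j > 0"
        by (meson not_le sum_nonpos)
      have "mpow A t i l \<ge> 0" using mpow_nonneg nn by blast
      with l have "mpow A t i l > 0" "A l j > 0"
        using nn by (auto simp: zero_less_mult_iff)
      then show "u i = 0" using Suc step a by blast
    qed
  qed
  from irr obtain t where "mpow A t i j0 > 0" unfolding irreducible_mat_def by blast
  then show ?thesis using gen z by blast
qed

lemma pf_exists:
  fixes A :: "'a::finite \<Rightarrow> 'a \<Rightarrow> real"
  assumes nn: "\<forall>i j. 0 \<le> A i j" and irr: "irreducible_mat A"
  shows "\<exists>r v. (\<forall>i. 0 < v i) \<and> (\<forall>j. (\<Sum>i\<in>UNIV. v i * A i j) = r * v j)"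
proof -
  define B where "B i j = A i j + (if i = j then 1 else 0)" for i j
  define S where "S = {x::real^'a. (\<forall>i. 0 \<le> x$i) \<and> sum (\<lambda>i. x$i) UNIV = 1}"
  define T where "T x = (\<Sum>j\<in>UNIV. \<Sum>i\<in>UNIV. x$i * B i j)" for x :: "real^'a"
  define f where "f x = (\<chi> j. (\<Sum>i\<in>UNIV. x$i * B i j) / T x)" for x
  have Bsplit: "(\<Sum>i\<in>UNIV. x$i * B i j) = (\<Sum>i\<in>UNIV. x$i * A i j) + x$j" for x j
  proof -
    have d: "(\<Sum>i\<in>UNIV. x$i * (if i = j then 1 else 0)) = x$j"
      by (simp add: if_distrib sum.delta cong: if_cong)
    show ?thesis by (simp add: B_def distrib_left sum.distrib d)
  qed
  have Tge: "T x \<ge> 1" if "x \<in> S" for x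
  proof -
    have "T x = (\<Sum>j\<in>UNIV. \<Sum>i\<in>UNIV. x$i * A i j) + (\<Sum>j\<in>UNIV. x$j)"
      unfolding T_def Bsplit by (simp add: sum.distrib)
    moreover have "(\<Sum>j\<in>UNIV. \<Sum>i\<in>UNIV. x$i * A i j) \<ge> 0"
      using that nn by (auto simp: S_def intro!: sum_nonneg)
    ultimately show ?thesis using that by (simp add: S_def)
  qed
  have "closed S" unfolding S_def
    by (intro closed_Collect_conj closed_Collect_all closed_Collect_le closed_Collect_eq continuous_intros)
  moreover have "bounded S"
  proof -
    have "norm x \<le> 1" if "x \<in> S" for x
    proof -
      have "norm x \<le> (\<Sum>i\<in>UNIV. \<bar>x$i\<bar>)" by (rule norm_le_l1_cart)
      also have "\<dots> = 1" using that by (simp add: S_def)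
      finally show ?thesis .
    qed
    then show ?thesis unfolding bounded_iff by blast
  qed
  ultimately have "compact S" by (simp add: compact_eq_bounded_closed)
  moreover have "convex S"
    unfolding convex_def S_def
    by (auto simp: sum.distrib sum_distrib_left[symmetric])
  moreover have "S \<noteq> {}"
  proof -
    have "(\<chi> i. 1 / real CARD('a)) \<in> S" by (simp add: S_def)
    thus ?thesis by blast
  qed
  moreover have "continuous_on S f"
    unfolding f_def T_def
    apply (intro continuous_intros)
    using Tge unfolding T_def by fastforce
  moreover have "f \<in> S \<rightarrow> S"
  proof
    fix x assume x: "x \<in> S"
    have Tp: "T x > 0" using Tge[OF x] by simp
    have "\<forall>j. 0 \<le> f x $ j" using x Tp nn
      by (auto simp: f_def S_def B_def intro!: divide_nonneg_pos sum_nonneg)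
    moreover have "sum (\<lambda>j. f x $ j) UNIV = 1"
      using Tp by (simp add: f_def sum_divide_distrib[symmetric] T_def)
    ultimately show "f x \<in> S" by (simp add: S_def)
  qed
  ultimately obtain x where x: "x \<in> S" "f x = x" using brouwer by metis
  have Tp: "T x > 0" using Tge[OF x(1)] by simp
  have eig: "(\<Sum>i\<in>UNIV. x$i * A i j) = (T x - 1) * x$j" for j
  proof -
    have "f x $ j = x $ j" using x by simp
    hence "(\<Sum>i\<in>UNIV. x$i * B i j) = T x * x$j" using Tp by (simp add: f_def field_simps)
    thus ?thesis unfolding Bsplit by (simp add: algebra_simps)
  qed
  have pos: "x$i > 0" for i
  proof (rule ccontr)
    assume "\<not> x$i > 0"
    moreover have "0 \<le> x$i" using x by (simp add: S_def)
    ultimately have "x$i = 0" by linarith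
    have nnx: "\<forall>l. 0 \<le> x$l" using x by (simp add: S_def)
    have eig': "\<forall>j. (\<Sum>l\<in>UNIV. x$l * A l j) = (T x - 1) * x$j" using eig by blast
    have "x$l = 0" for l
      using zero_propagate[OF nn irr, of "\<lambda>i. x$i", OF nnx eig' \<open>x$i = 0\<close>] by simp
    hence "sum (\<lambda>l. x$l) UNIV = 0" by simp
    thus False using x by (simp add: S_def)
  qed
  show ?thesis using pos eig by blast
qed

lemma pf_max_ratio:
  fixes v v' :: "'a::finite \<Rightarrow> real"
  assumes "\<forall>i. 0 < v i"
  obtains c j where "\<forall>i. v' i \<le> c * v i" "v' j = c * v j"
proof -
  define c where "c = Max (range (\<lambda>i. v' i / v i))"
  have "c \<in> range (\<lambda>i. v' i / v i)" unfolding c_def by (intro Max_in) auto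
  then obtain j where j: "c = v' j / v j" by auto
  have "v' i / v i \<le> c" for i unfolding c_def by (intro Max_ge) auto
  hence "v' i \<le> c * v i" for i using assms by (simp add: divide_le_eq)
  moreover have "v' j = c * v j"
  proof -
    have "v j > 0" using assms by simp
    thus ?thesis using j by simp
  qed
  ultimately show ?thesis using that by blast
qed

lemma pf_eig_le:
  fixes A :: "'a::finite \<Rightarrow> 'a \<Rightarrow> real"
  assumes nn: "\<forall>i j. 0 \<le> A i j"
    and v: "\<forall>i. 0 < v i" "\<forall>j. (\<Sum>i\<in>UNIV. v i * A i j) = r * v j"
    and v': "\<forall>i. 0 < v' i" "\<forall>j. (\<Sum>i\<in>UNIV. v' i * A i j) = r' * v' j"
  shows "r' \<le> r"
proof -
  obtain c j where c: "\<forall>i. v' i \<le> c * v i" "v' j = c * v j" using pf_max_ratio[OF v(1)] by blast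
  have "r' * v' j = (\<Sum>i\<in>UNIV. v' i * A i j)" using v' by simp
  also have "\<dots> \<le> (\<Sum>i\<in>UNIV. c * v i * A i j)"
    using c nn by (intro sum_mono mult_right_mono) auto
  also have "\<dots> = c * (\<Sum>i\<in>UNIV. v i * A i j)" by (simp add: sum_distrib_left mult.assoc)
  also have "\<dots> = c * (r * v j)" using v by simp
  also have "\<dots> = r * v' j" using c by simp
  finally show ?thesis using v' by simp
qed

lemma pf_vec_prop:
  fixes A :: "'a::finite \<Rightarrow> 'a \<Rightarrow> real"
  assumes nn: "\<forall>i j. 0 \<le> A i j" and irr: "irreducible_mat A"
    and v: "\<forall>i. 0 < v i" "\<forall>j. (\<Sum>i\<in>UNIV. v i * A i j) = r * v j"
    and v': "\<forall>i. 0 < v' i" "\<forall>j. (\<Sum>i\<in>UNIV. v' i * A i j) = r * v' j"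
  obtains c where "\<forall>i. v' i = c * v i"
proof -
  obtain c j where c: "\<forall>i. v' i \<le> c * v i" "v' j = c * v j" using pf_max_ratio[OF v(1)] by blast
  define u where "u i = c * v i - v' i" for i
  have u0: "\<forall>i. 0 \<le> u i" using c by (simp add: u_def)
  have ue1: "(\<Sum>i\<in>UNIV. u i * A i j) = c * (\<Sum>i\<in>UNIV. v i * A i j) - (\<Sum>i\<in>UNIV. v' i * A i j)" for j
    by (simp add: u_def left_diff_distrib sum_subtractf sum_distrib_left mult.assoc)
  have ue: "\<forall>j. (\<Sum>i\<in>UNIV. u i * A i j) = r * u j"
  proof
    fix j
    have "(\<Sum>i\<in>UNIV. u i * A i j) = c * (r * v j) - r * v' j"
      unfolding ue1 using v v' by simp
    thus "(\<Sum>i\<in>UNIV. u i * A i j) = r * u j" by (simp add: u_def algebra_simps)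
  qed
  have "u j = 0" using c by (simp add: u_def)
  hence "u i = 0" for i using zero_propagate[OF nn irr u0 ue] by blast
  hence "\<forall>i. v' i = c * v i" by (simp add: u_def)
  thus ?thesis using that by blast
qed

lemma pf_props:
  fixes A :: "'a::finite \<Rightarrow> 'a \<Rightarrow> real"
  assumes nn: "\<forall>i j. 0 \<le> A i j" and irr: "irreducible_mat A"
  shows "pf_eigval A > 0 \<and> (\<forall>i. pf_vec A i \<ge> 1) \<and>
         (\<forall>j. (\<Sum>i\<in>UNIV. pf_vec A i * A i j) = pf_eigval A * pf_vec A j)"
proof -
  obtain r v where v: "\<forall>i. 0 < v i" "\<forall>j. (\<Sum>i\<in>UNIV. v i * A i j) = r * v j"
    using pf_exists[OF nn irr] by blast
  define m where "m = Min (range v)"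
  have "m \<in> range v" unfolding m_def by (intro Min_in) auto
  then obtain i0 where i0: "v i0 = m" by auto
  have mle: "m \<le> v i" for i unfolding m_def by (intro Min_le) auto
  have mpos: "m > 0" using v i0 by metis
  define w where "w i = v i / m" for i
  have wpos: "\<forall>i. 0 < w i" using v mpos by (simp add: w_def)
  have weig: "\<forall>j. (\<Sum>i\<in>UNIV. w i * A i j) = r * w j"
    using v mpos by (simp add: w_def sum_divide_distrib[symmetric])
  have wge: "w i \<ge> 1" for i using mle[of i] mpos by (simp add: w_def)
  have wi0: "w i0 = 1" using i0 mpos by (simp add: w_def)
  have wmin: "Min (range w) = 1"
    by (rule Min_eqI) (use wge wi0 in auto)
  have eigv: "pf_eigval A = r"
    unfolding pf_eigval_def
  proof (rule the_equality)
    show "\<exists>v. (\<forall>i. 0 < v i) \<and> (\<forall>j. (\<Sum>i\<in>UNIV. v i * A i j) = r * v j)" using v by blast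
  next
    fix r' assume "\<exists>v'. (\<forall>i. 0 < v' i) \<and> (\<forall>j. (\<Sum>i\<in>UNIV. v' i * A i j) = r' * v' j)"
    then obtain v' where v': "\<forall>i. 0 < v' i" "\<forall>j. (\<Sum>i\<in>UNIV. v' i * A i j) = r' * v' j" by blast
    show "r' = r" using pf_eig_le[OF nn v v'] pf_eig_le[OF nn v' v] by simp
  qed
  have vecw: "pf_vec A = w"
    unfolding pf_vec_def eigv
  proof (rule the_equality)
    show "(\<forall>i. 0 < w i) \<and> (\<forall>j. (\<Sum>i\<in>UNIV. w i * A i j) = r * w j) \<and> Min (range w) = 1"
      using wpos weig wmin by blast
  next
    fix v' assume a: "(\<forall>i. 0 < v' i) \<and> (\<forall>j. (\<Sum>i\<in>UNIV. v' i * A i j) = r * v' j) \<and> Min (range v') = 1"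
    then obtain c where c: "\<forall>i. v' i = c * w i" using pf_vec_prop[OF nn irr wpos weig, of v'] by blast
    have "Min (range v') \<in> range v'" by (intro Min_in) auto
    then obtain i1 where i1: "v' i1 = 1" using a by auto
    have "1 \<le> v' i0" using a by (metis Min_le UNIV_I finite finite_imageI rangeI)
    hence c1: "1 \<le> c" using c wi0 by simp
    have "c * w i1 = 1" using c i1 by simp
    moreover have "c * 1 \<le> c * w i1" using c1 wge[of i1] by (intro mult_left_mono) auto
    ultimately have "c \<le> 1" by simp
    hence "c = 1" using c1 by simp
    thus "v' = w" using c by (intro ext) simp
  qed
  have rpos: "r > 0"
  proof -
    obtain j :: 'a where True by simp
    from irr obtain t where t: "t > 0" "mpow A t j j > 0" unfolding irreducible_mat_def by blast
    then obtain t' where t': "t = Suc t'" by (cases t) auto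
    from t have "(\<Sum>l\<in>UNIV. mpow A t' j l * A l j) > 0" by (simp add: t')
    then obtain l where "mpow A t' j l * A l j > 0" by (meson not_le sum_nonpos)
    moreover have "0 \<le> mpow A t' j l" by (rule mpow_nonneg[OF nn])
    ultimately have Al: "A l j > 0" by (auto simp: zero_less_mult_iff)
    have "0 < w l * A l j" using Al wpos by simp
    also have "\<dots> \<le> (\<Sum>i\<in>UNIV. w i * A i j)"
    proof (rule member_le_sum)
      fix x show "0 \<le> w x * A x j" using wpos[rule_format, of x] nn by simp
    qed auto
    also have "\<dots> = r * w j" using weig by simp
    finally have "0 < r * w j" .
    thus ?thesis using wpos zero_less_mult_pos2 by blast
  qed
  show ?thesis using eigv vecw rpos wge weig by simp
qed



lemma finite_len: "finite {xs::'a::finite list. length xs = n}"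
  using finite_lists_length_eq[of "UNIV::'a set" n] by simp

lemma card_len: "card {xs::'a::finite list. length xs = n} = CARD('a) ^ n"
  using card_lists_length_eq[of "UNIV::'a set" n] by simp

lemma sum_lists_Suc:
  "(\<Sum>xs\<in>{xs::'a::finite list. length xs = Suc n}. f xs) = (\<Sum>x\<in>UNIV. \<Sum>xs\<in>{xs. length xs = n}. f (x#xs))"
proof -
  have eq: "{xs::'a list. length xs = Suc n} = (\<lambda>(x,xs). x#xs) ` (UNIV \<times> {xs. length xs = n})"
    by (auto simp: length_Suc_conv image_iff)
  have inj: "inj_on (\<lambda>(x,xs). x#xs) (UNIV \<times> {xs::'a list. length xs = n})" by (auto simp: inj_on_def)
  have "sum f ((\<lambda>(x,xs). x#xs) ` (UNIV \<times> {xs. length xs = n})) = (\<Sum>p\<in>UNIV \<times> {xs::'a list. length xs = n}. f (fst p # snd p))"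
    by (subst sum.reindex[OF inj]) (simp add: split_def o_def)
  also have "\<dots> = (\<Sum>x\<in>UNIV. \<Sum>xs\<in>{xs. length xs = n}. f (x#xs))"
    by (simp add: sum.cartesian_product split_def)
  finally show ?thesis unfolding eq .
qed

lemma len0: "{xs::'a list. length xs = 0} = {[]}" by auto

lemma chain_nonneg: "\<forall>a b. 0 \<le> W a b \<Longrightarrow> 0 \<le> chain_prob W p as"
  by (induction as arbitrary: p) auto

lemma markov_nonneg: "\<forall>a. 0 \<le> P a \<Longrightarrow> \<forall>a b. 0 \<le> W a b \<Longrightarrow> 0 \<le> markov_prob P W as"
  by (cases as) (auto intro!: mult_nonneg_nonneg chain_nonneg)

lemma chain_powr: "\<forall>a b. 0 \<le> W a b \<Longrightarrow> chain_prob W p as powr e = chain_prob (\<lambda>a b. W a b powr e) p as"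
  by (induction as arbitrary: p) (auto simp: powr_mult chain_nonneg)

lemma markov_powr: "\<forall>a. 0 \<le> P a \<Longrightarrow> \<forall>a b. 0 \<le> W a b \<Longrightarrow>
   markov_prob P W as powr e = markov_prob (\<lambda>a. P a powr e) (\<lambda>a b. W a b powr e) as"
  by (cases as) (auto simp: powr_mult chain_nonneg chain_powr)

lemma chain_prod: "chain_prob W1 p as * chain_prob W2 (g p) (map g as) =
    chain_prob (\<lambda>a b. W1 a b * W2 (g a) (g b)) p as"
  by (induction as arbitrary: p) (auto simp: algebra_simps)

lemma markov_prod: "markov_prob P1 W1 as * markov_prob P2 W2 (map g as) =
    markov_prob (\<lambda>a. P1 a * P2 (g a)) (\<lambda>a b. W1 a b * W2 (g a) (g b)) as"
  by (cases as) (auto simp: algebra_simps chain_prod[symmetric])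

lemma chain_sum_bound:
  fixes A :: "'a::finite \<Rightarrow> 'a \<Rightarrow> real"
  assumes nn: "\<forall>a b. 0 \<le> A a b" and v1: "\<forall>a. 1 \<le> v a"
    and eig: "\<forall>p. (\<Sum>a\<in>UNIV. v a * A a p) = l * v p" and l0: "0 \<le> l"
  shows "(\<Sum>as\<in>{as::'a list. length as = t}. chain_prob A p as) \<le> l^t * v p"
proof (induction t arbitrary: p)
  case 0
  then show ?case using v1 by (simp add: len0)
next
  case (Suc t)
  have "(\<Sum>as\<in>{as::'a list. length as = Suc t}. chain_prob A p as)
      = (\<Sum>a\<in>UNIV. A a p * (\<Sum>as\<in>{as::'a list. length as = t}. chain_prob A a as))"
    by (simp add: sum_lists_Suc sum_distrib_left)
  also have "\<dots> \<le> (\<Sum>a\<in>UNIV. A a p * (l^t * v a))"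
    using Suc nn by (intro sum_mono mult_left_mono) auto
  also have "\<dots> = l^t * (\<Sum>a\<in>UNIV. v a * A a p)"
    by (simp add: sum_distrib_left algebra_simps)
  also have "\<dots> = l^Suc t * v p" using eig by simp
  finally show ?case .
qed

lemma markov_sum_bound:
  fixes A :: "'a::finite \<Rightarrow> 'a \<Rightarrow> real"
  assumes nn: "\<forall>a b. 0 \<le> A a b" and v1: "\<forall>a. 1 \<le> v a"
    and eig: "\<forall>p. (\<Sum>a\<in>UNIV. v a * A a p) = l * v p" and l0: "0 \<le> l"
    and w: "\<forall>a. 0 \<le> w a"
  shows "(\<Sum>as\<in>{as::'a list. length as = Suc t}. markov_prob w A as) \<le> l^t * (\<Sum>a\<in>UNIV. v a * w a)"
proof -
  have "(\<Sum>as\<in>{as::'a list. length as = Suc t}. markov_prob w A as)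
      = (\<Sum>a\<in>UNIV. w a * (\<Sum>as\<in>{as::'a list. length as = t}. chain_prob A a as))"
    by (simp add: sum_lists_Suc sum_distrib_left)
  also have "\<dots> \<le> (\<Sum>a\<in>UNIV. w a * (l^t * v a))"
    using chain_sum_bound[OF nn v1 eig l0] w by (intro sum_mono mult_left_mono) auto
  also have "\<dots> = l^t * (\<Sum>a\<in>UNIV. v a * w a)"
    by (simp add: sum_distrib_left algebra_simps)
  finally show ?thesis .
qed

definition vadd :: "'x::ab_group_add list \<Rightarrow> 'x list \<Rightarrow> 'x list" where "vadd a b = map2 (+) a b"
definition vsub :: "'x::ab_group_add list \<Rightarrow> 'x list \<Rightarrow> 'x list" where "vsub a b = map2 (-) a b"
definition ysub :: "('x::ab_group_add \<times> 'z) list \<Rightarrow> 'x list \<Rightarrow> ('x \<times> 'z) list" where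
  "ysub ys xt = map2 (\<lambda>(x, z) xt. (x - xt, z)) ys xt"
definition yadd :: "('x::ab_group_add \<times> 'z) list \<Rightarrow> 'x list \<Rightarrow> ('x \<times> 'z) list" where
  "yadd ys xt = map2 (\<lambda>(x, z) xt. (x + xt, z)) ys xt"

lemma ysub_Cons[simp]: "ysub ((x,z)#ys) (t#ts) = (x - t, z) # ysub ys ts" by (simp add: ysub_def)
lemma ysub_Nil[simp]: "ysub [] ts = []" by (simp add: ysub_def)

lemma len_vadd[simp]: "length (vadd a b) = min (length a) (length b)" by (simp add: vadd_def)
lemma len_vsub[simp]: "length (vsub a b) = min (length a) (length b)" by (simp add: vsub_def)
lemma len_ysub[simp]: "length (ysub a b) = min (length a) (length b)" by (simp add: ysub_def)
lemma len_yadd[simp]: "length (yadd a b) = min (length a) (length b)" by (simp add: yadd_def)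

lemma vadd_vsub: "length d = length e \<Longrightarrow> vadd e (vsub d e) = d"
  by (induction d e rule: list_induct2) (auto simp: vadd_def vsub_def)
lemma vsub_vadd: "length d = length e \<Longrightarrow> vsub (vadd e d) e = d"
  by (induction d e rule: list_induct2) (auto simp: vadd_def vsub_def)
lemma ysub_yadd: "length y = length e \<Longrightarrow> ysub (yadd y e) e = y"
  by (induction y e rule: list_induct2) (auto simp: yadd_def ysub_def split: prod.splits)
lemma yadd_ysub: "length y = length e \<Longrightarrow> yadd (ysub y e) e = y"
  by (induction y e rule: list_induct2) (auto simp: yadd_def ysub_def split: prod.splits)
lemma snd_ysub: "length y = length e \<Longrightarrow> map snd (ysub y e) = map snd y"
  by (induction y e rule: list_induct2) (auto simp: ysub_def split: prod.splits)
lemma ysub_ysub: "length y = length e \<Longrightarrow> length d = length e \<Longrightarrow> ysub (ysub y e) d = ysub y (vadd e d)"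
proof (induction y arbitrary: e d)
  case Nil then show ?case by simp
next
  case (Cons a y)
  then obtain t e' u d' where "e = t#e'" "d = u#d'" by (metis length_Suc_conv)
  with Cons show ?case by (cases a) (auto simp: vadd_def algebra_simps)
qed

lemma sum_shift_X:
  fixes e :: "'x::ab_group_add list"
  assumes "length e = n"
  shows "(\<Sum>d\<in>{d. length d = n}. G (vadd e d)) = (\<Sum>d\<in>{d. length d = n}. G d)"
  by (rule sum.reindex_bij_witness[where i="\<lambda>d. vsub d e" and j="\<lambda>d. vadd e d"])
     (use assms in \<open>auto simp: vadd_vsub vsub_vadd\<close>)

lemma sum_shift_Y:
  fixes e :: "'x::ab_group_add list"
  assumes "length e = n"
  shows "(\<Sum>y\<in>{y::('x\<times>'z) list. length y = n}. G (ysub y e)) = (\<Sum>y\<in>{y. length y = n}. G y)"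
  by (rule sum.reindex_bij_witness[where i="\<lambda>y. yadd y e" and j="\<lambda>y. ysub y e"])
     (use assms in \<open>auto simp: ysub_yadd yadd_ysub\<close>)

lemma sum_UNIV_minus:
  fixes x :: "'x::{ab_group_add,finite}"
  shows "(\<Sum>u\<in>UNIV. f (x - u)) = (\<Sum>u\<in>UNIV. f u)"
  by (rule sum.reindex_bij_witness[where i="\<lambda>u. x - u" and j="\<lambda>u. x - u"]) auto

lemma WcZ_eq:
  assumes "assumption1 Wc"
  shows "(\<Sum>u\<in>UNIV. Wc (u, z) (x0, z0)) = WcZ Wc z z0"
  using assms unfolding assumption1_def WcZ_def by metis

lemma chain_marg:
  fixes Wc :: "'x::{ab_group_add,finite} \<times> 'z::finite \<Rightarrow> 'x \<times> 'z \<Rightarrow> real"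
  assumes a1: "assumption1 Wc"
  shows "length y = t \<Longrightarrow> (\<Sum>d\<in>{d::'x list. length d = t}. chain_prob Wc (x0,z0) (ysub y d))
     = chain_prob (WcZ Wc) z0 (map snd y)"
proof (induction y arbitrary: t x0 z0)
  case Nil then show ?case by (simp add: len0)
next
  case (Cons a y)
  obtain x z where a: "a = (x,z)" by fastforce
  from Cons obtain t' where t: "t = Suc t'" "length y = t'" by auto
  have "(\<Sum>d\<in>{d::'x list. length d = t}. chain_prob Wc (x0,z0) (ysub (a#y) d))
     = (\<Sum>u\<in>UNIV. Wc (x-u, z) (x0,z0) * (\<Sum>d\<in>{d::'x list. length d = t'}. chain_prob Wc (x-u,z) (ysub y d)))"
    by (simp add: t a sum_lists_Suc sum_distrib_left)
  also have "\<dots> = (\<Sum>u\<in>UNIV. Wc (x-u, z) (x0,z0) * chain_prob (WcZ Wc) z (map snd y))"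
    using Cons.IH[OF t(2)] by simp
  also have "\<dots> = (\<Sum>u\<in>UNIV. Wc (u, z) (x0,z0)) * chain_prob (WcZ Wc) z (map snd y)"
    by (simp add: sum_distrib_right sum_UNIV_minus[where f="\<lambda>u. Wc (u, z) (x0,z0) * chain_prob (WcZ Wc) z (map snd y)"])
  also have "\<dots> = chain_prob (WcZ Wc) z0 (map snd (a#y))"
    using WcZ_eq[OF a1] by (simp add: a)
  finally show ?case .
qed

lemma markov_marg:
  fixes Wc :: "'x::{ab_group_add,finite} \<times> 'z::finite \<Rightarrow> 'x \<times> 'z \<Rightarrow> real"
  assumes a1: "assumption1 Wc" and len: "length y = n"
  shows "(\<Sum>d\<in>{d::'x list. length d = n}. markov_prob PXZ1 Wc (ysub y d))
     = markov_prob (PZ1 PXZ1) (WcZ Wc) (map snd y)"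
proof (cases y)
  case Nil then show ?thesis using len by (simp add: len0)
next
  case (Cons a y')
  obtain x z where a: "a = (x,z)" by fastforce
  from Cons len obtain t' where t: "n = Suc t'" "length y' = t'" by auto
  have "(\<Sum>d\<in>{d::'x list. length d = n}. markov_prob PXZ1 Wc (ysub y d))
     = (\<Sum>u\<in>UNIV. PXZ1 (x-u, z) * (\<Sum>d\<in>{d::'x list. length d = t'}. chain_prob Wc (x-u,z) (ysub y' d)))"
    by (simp add: Cons t a sum_lists_Suc sum_distrib_left)
  also have "\<dots> = (\<Sum>u\<in>UNIV. PXZ1 (x-u, z) * chain_prob (WcZ Wc) z (map snd y'))"
    using chain_marg[OF a1 t(2)] by simp
  also have "\<dots> = (\<Sum>u\<in>UNIV. PXZ1 (u, z)) * chain_prob (WcZ Wc) z (map snd y')"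
    by (simp add: sum_distrib_right sum_UNIV_minus[where f="\<lambda>u. PXZ1 (u, z) * chain_prob (WcZ Wc) z (map snd y')"])
  also have "\<dots> = markov_prob (PZ1 PXZ1) (WcZ Wc) (map snd y)"
    by (simp add: Cons a PZ1_def)
  finally show ?thesis .
qed



lemma vsub_vadd2: "length d = length e \<Longrightarrow> vsub (vadd e d) d = e"
  by (induction d e rule: list_induct2) (auto simp: vadd_def vsub_def)
lemma vadd_vsub2: "length d = length e \<Longrightarrow> vadd (vsub e d) d = e"
  by (induction d e rule: list_induct2) (auto simp: vadd_def vsub_def)

lemma young_avg:
  fixes f g :: "'c \<Rightarrow> real"
  assumes fin: "finite C" and f: "\<forall>c. 0 \<le> f c" and g: "\<forall>c. 0 \<le> g c" and a: "0 \<le> a"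
    and fg: "(\<Sum>c\<in>C. f c * g c) \<le> a * (\<Sum>c\<in>C. f c)" and s: "0 < s" "s < 1"
  shows "(\<Sum>c\<in>C. f c * g c powr s) \<le> a powr s * (\<Sum>c\<in>C. f c)"
proof (cases "a = 0")
  case True
  then have le0: "(\<Sum>c\<in>C. f c * g c) \<le> 0" using fg by simp
  have nn: "\<forall>c\<in>C. 0 \<le> f c * g c" using f g by simp
  have "0 \<le> (\<Sum>c\<in>C. f c * g c)" using nn by (intro sum_nonneg) auto
  hence s0: "(\<Sum>c\<in>C. f c * g c) = 0" using le0 by linarith
  have "\<forall>c\<in>C. f c * g c = 0"
    using sum_nonneg_eq_0_iff[OF fin, of "\<lambda>c. f c * g c"] nn s0 by blast
  hence "\<forall>c\<in>C. f c * g c powr s = 0" by auto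
  hence "(\<Sum>c\<in>C. f c * g c powr s) = 0" by (intro sum.neutral) blast
  then show ?thesis using True by simp
next
  case False
  hence apos: "a > 0" using a by simp
  have pt: "f c * g c powr s * a powr (1-s) \<le> s * (f c * g c) + (1-s) * a * f c" for c
  proof (cases "g c = 0")
    case True then show ?thesis using f s a by simp
  next
    case False
    hence "g c > 0" using g by (simp add: less_le)
    hence "g c powr s * a powr (1-s) \<le> s * g c + (1-s) * a"
      using Youngs_inequality_0[of s "1-s" "g c" a] s apos by simp
    hence "f c * (g c powr s * a powr (1-s)) \<le> f c * (s * g c + (1-s) * a)"
      using f by (intro mult_left_mono) auto
    thus ?thesis by (simp add: algebra_simps)
  qed
  have "(\<Sum>c\<in>C. f c * g c powr s) * a powr (1-s) = (\<Sum>c\<in>C. f c * g c powr s * a powr (1-s))"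
    by (simp add: sum_distrib_right)
  also have "\<dots> \<le> (\<Sum>c\<in>C. s * (f c * g c) + (1-s) * a * f c)"
    by (intro sum_mono pt)
  also have "\<dots> = s * (\<Sum>c\<in>C. f c * g c) + (1-s) * a * (\<Sum>c\<in>C. f c)"
    by (simp add: sum.distrib sum_distrib_left)
  also have "\<dots> \<le> s * (a * (\<Sum>c\<in>C. f c)) + (1-s) * a * (\<Sum>c\<in>C. f c)"
    using fg s by (intro add_right_mono mult_left_mono) auto
  also have "\<dots> = (a powr s * (\<Sum>c\<in>C. f c)) * a powr (1-s)"
    using apos by (simp add: algebra_simps flip: powr_add)
  finally show ?thesis using apos by (simp add: mult_le_cancel_right)
qed

lemma dec_bound:
  fixes q :: "'m \<Rightarrow> real"
  assumes fin: "finite M" and q: "\<forall>m. 0 \<le> q m" and ms: "ms \<in> M" and mst: "mst \<in> M"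
    and mx: "\<forall>m\<in>M. q m \<le> q mst" and s: "0 < s" "s < 1"
  shows "(if mst \<noteq> ms then q ms else 0) \<le> q ms powr (1-s) * (\<Sum>m'\<in>M-{ms}. q m') powr s"
proof (cases "mst = ms")
  case True then show ?thesis by simp
next
  case False
  have "q ms \<le> q mst" using mx ms by simp
  also have "q mst \<le> (\<Sum>m'\<in>M-{ms}. q m')"
    by (rule member_le_sum) (use mst False q fin in auto)
  finally have le: "q ms \<le> (\<Sum>m'\<in>M-{ms}. q m')" .
  have "q ms = q ms powr (1-s) * q ms powr s"
  proof (cases "q ms = 0")
    case True then show ?thesis by simp
  next
    case False then have "q ms > 0" using q by (simp add: less_le)
    then show ?thesis by (simp flip: powr_add)
  qed
  also have "\<dots> \<le> q ms powr (1-s) * (\<Sum>m'\<in>M-{ms}. q m') powr s"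
    using le q s by (intro mult_left_mono powr_mono2) auto
  finally show ?thesis using False by simp
qed

lemma upd_PiE: "c \<in> Pi\<^sub>E M B \<Longrightarrow> m \<in> M \<Longrightarrow> v \<in> B m \<Longrightarrow> c(m := v) \<in> Pi\<^sub>E M B"
  by (auto simp: PiE_iff extensional_def)

lemma shift_C:
  fixes F :: "'x::{ab_group_add,finite} list \<Rightarrow> real" and Q :: "('x \<times> 'z) list \<Rightarrow> real"
  assumes m': "m' \<in> Mk" and ne: "ms \<noteq> m'" and y: "length y = n"
    and C: "C = Pi\<^sub>E Mk (\<lambda>_. {d::'x list. length d = n})"
  shows "(\<Sum>c\<in>C. F (c ms) * Q (ysub y (c m'))) * real (card {d::'x list. length d = n})
       = (\<Sum>c\<in>C. F (c ms)) * (\<Sum>d\<in>{d::'x list. length d = n}. Q (ysub y d))"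
proof -
  let ?X = "{d::'x list. length d = n}"
  have cm: "c m' \<in> ?X" if "c \<in> C" for c using that m' C by auto
  have shift: "(\<Sum>c\<in>C. F (c ms) * Q (ysub y (c m'))) = (\<Sum>c\<in>C. F (c ms) * Q (ysub y (vadd (c m') d)))"
    if d: "d \<in> ?X" for d
  proof (rule sum.reindex_bij_witness[where j="\<lambda>c. c(m' := vsub (c m') d)" and i="\<lambda>c. c(m' := vadd (c m') d)"])
    fix a assume a: "a \<in> C"
    have la: "length (a m') = length d" using cm[OF a] d by simp
    show "a(m' := vsub (a m') d, m' := vadd ((a(m' := vsub (a m') d)) m') d) = a"
      using la by (simp add: vadd_vsub2)
    show "a(m' := vsub (a m') d) \<in> C"
      using upd_PiE[of a Mk "\<lambda>_. {d::'x list. length d = n}" m' "vsub (a m') d"] a la C m' d by simp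
    show "F ((a(m' := vsub (a m') d)) ms) * Q (ysub y (vadd ((a(m' := vsub (a m') d)) m') d)) = F (a ms) * Q (ysub y (a m'))"
      using ne la by (simp add: vadd_vsub2)
  next
    fix b assume b: "b \<in> C"
    have lb: "length (b m') = length d" using cm[OF b] d by simp
    show "b(m' := vadd (b m') d, m' := vsub ((b(m' := vadd (b m') d)) m') d) = b"
      using lb by (simp add: vsub_vadd2)
    show "b(m' := vadd (b m') d) \<in> C"
      using upd_PiE[of b Mk "\<lambda>_. {d::'x list. length d = n}" m' "vadd (b m') d"] b lb C m' d by simp
  qed
  have "(\<Sum>c\<in>C. F (c ms) * Q (ysub y (c m'))) * real (card ?X)
      = (\<Sum>d\<in>?X. (\<Sum>c\<in>C. F (c ms) * Q (ysub y (c m'))))" by (simp add: mult.commute)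
  also have "\<dots> = (\<Sum>d\<in>?X. \<Sum>c\<in>C. F (c ms) * Q (ysub y (vadd (c m') d)))"
    by (rule sum.cong) (use shift in auto)
  also have "\<dots> = (\<Sum>c\<in>C. F (c ms) * (\<Sum>d\<in>?X. Q (ysub y (vadd (c m') d))))"
    by (simp add: sum.swap[of _ ?X] sum_distrib_left)
  also have "\<dots> = (\<Sum>c\<in>C. F (c ms) * (\<Sum>d\<in>?X. Q (ysub y d)))"
    by (rule sum.cong) (use cm sum_shift_X[where G="\<lambda>d. Q (ysub y d)"] in auto)
  also have "\<dots> = (\<Sum>c\<in>C. F (c ms)) * (\<Sum>d\<in>?X. Q (ysub y d))"
    by (simp add: sum_distrib_right)
  finally show ?thesis .
qed

lemma Zn_inv:
  fixes Q :: "('x::ab_group_add \<times> 'z) list \<Rightarrow> real"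
  assumes "length y = n" "length e = n"
  shows "(\<Sum>d\<in>{d::'x list. length d = n}. Q (ysub (ysub y e) d)) = (\<Sum>d\<in>{d::'x list. length d = n}. Q (ysub y d))"
proof -
  have "(\<Sum>d\<in>{d::'x list. length d = n}. Q (ysub (ysub y e) d)) = (\<Sum>d\<in>{d::'x list. length d = n}. Q (ysub y (vadd e d)))"
    by (rule sum.cong) (use assms in \<open>auto simp: ysub_ysub\<close>)
  also have "\<dots> = (\<Sum>d\<in>{d::'x list. length d = n}. Q (ysub y d))"
    using sum_shift_X[OF assms(2), where G="\<lambda>d. Q (ysub y d)"] by simp
  finally show ?thesis .
qed



lemma exists_le_avg:
  fixes f :: "'c \<Rightarrow> real"
  assumes "finite C" "C \<noteq> {}" "(\<Sum>c\<in>C. f c) \<le> real (card C) * B"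
  shows "\<exists>c\<in>C. f c \<le> B"
proof (rule ccontr)
  assume "\<not> ?thesis"
  hence "\<forall>c\<in>C. B < f c" by auto
  hence "(\<Sum>c\<in>C. B) < (\<Sum>c\<in>C. f c)" using assms by (intro sum_strict_mono) auto
  thus False using assms by simp
qed

lemma random_coding:
  fixes PM :: "'m::finite list \<Rightarrow> real" and Q :: "('x::{ab_group_add,finite} \<times> 'z::finite) list \<Rightarrow> real"
  assumes s: "0 < s" "s < 1" and PM: "\<forall>ms. 0 \<le> PM ms" and Q: "\<forall>y. 0 \<le> Q y"
    and PMs: "(\<Sum>ms\<in>{ms. length ms = k}. PM ms) \<le> 1"
  shows "\<exists>c. (\<forall>ms. length ms = k \<longrightarrow> length (c ms) = n) \<and> (\<exists>dec.
      (\<Sum>ms\<in>{ms. length ms = k}. PM ms * (\<Sum>y\<in>{y. length y = n}. (if dec y \<noteq> ms then Q (ysub y (c ms)) else 0)))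
      \<le> real (card {d::'x list. length d = n}) powr (-s) * (\<Sum>ms\<in>{ms. length ms = k}. PM ms powr (1-s))
        * (\<Sum>y\<in>{y. length y = n}. Q y powr (1-s) * (\<Sum>d\<in>{d::'x list. length d = n}. Q (ysub y d)) powr s))"
proof -
  define Mk where "Mk = {ms::'m list. length ms = k}"
  define Xn where "Xn = {d::'x list. length d = n}"
  define Yn where "Yn = {y::('x\<times>'z) list. length y = n}"
  define C where "C = Pi\<^sub>E Mk (\<lambda>_. Xn)"
  define Zn where "Zn y = (\<Sum>d\<in>Xn. Q (ysub y d))" for y
  define cX where "cX = real (card Xn)"
  define qq where "qq ms e y = PM ms * Q (ysub y e)" for ms e y
  define dec where "dec c y = (SOME m. m \<in> Mk \<and> (\<forall>m'\<in>Mk. qq m' (c m') y \<le> qq m (c m) y))"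
    for c :: "'m list \<Rightarrow> 'x list" and y
  define err where "err c = (\<Sum>ms\<in>Mk. PM ms * (\<Sum>y\<in>Yn. (if dec c y \<noteq> ms then Q (ysub y (c ms)) else 0)))" for c
  define SM where "SM = (\<Sum>ms\<in>Mk. PM ms powr (1-s))"
  define SC where "SC = (\<Sum>y\<in>Yn. Q y powr (1-s) * Zn y powr s)"
  define B where "B = cX powr (-s) * SM * SC"
  have finM: "finite Mk" unfolding Mk_def by (rule finite_len)
  have finX: "finite Xn" unfolding Xn_def by (rule finite_len)
  have finY: "finite Yn" unfolding Yn_def by (rule finite_len)
  have finC: "finite C" unfolding C_def using finM finX by (intro finite_PiE) auto
  have Mne: "Mk \<noteq> {}"
  proof -
    have "replicate k undefined \<in> Mk" by (simp add: Mk_def)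
    thus ?thesis by blast
  qed
  have Xne: "Xn \<noteq> {}"
  proof -
    have "replicate n 0 \<in> Xn" by (simp add: Xn_def)
    thus ?thesis by blast
  qed
  have Cne: "C \<noteq> {}" unfolding C_def using Xne by (simp add: PiE_eq_empty_iff)
  have cXpos: "cX > 0" unfolding cX_def using finX Xne by (simp add: card_gt_0_iff)
  have cmem: "c ms \<in> Xn" if "c \<in> C" "ms \<in> Mk" for c ms using that unfolding C_def by (auto simp: PiE_iff)
  have qq_nn: "0 \<le> qq ms e y" for ms e y using PM Q by (simp add: qq_def)
  have Zn_nn: "0 \<le> Zn y" for y using Q by (simp add: Zn_def sum_nonneg)
  have dec_prop: "dec c y \<in> Mk \<and> (\<forall>m'\<in>Mk. qq m' (c m') y \<le> qq (dec c y) (c (dec c y)) y)" for c y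
  proof -
    let ?f = "\<lambda>m. qq m (c m) y"
    have "Max (?f ` Mk) \<in> ?f ` Mk" using finM Mne by (intro Max_in) auto
    then obtain m where m: "m \<in> Mk" "?f m = Max (?f ` Mk)" by auto
    have "\<forall>m'\<in>Mk. ?f m' \<le> ?f m" using m finM by (simp add: Max_ge)
    hence "\<exists>m. m \<in> Mk \<and> (\<forall>m'\<in>Mk. ?f m' \<le> ?f m)" using m by blast
    thus ?thesis unfolding dec_def by (rule someI_ex)
  qed
  define T where "T c ms y = qq ms (c ms) y powr (1-s) * (\<Sum>m'\<in>Mk-{ms}. qq m' (c m') y) powr s" for c ms y
  have step1: "err c \<le> (\<Sum>ms\<in>Mk. \<Sum>y\<in>Yn. T c ms y)" for c
  proof -
    have "err c = (\<Sum>ms\<in>Mk. \<Sum>y\<in>Yn. (if dec c y \<noteq> ms then qq ms (c ms) y else 0))"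
      unfolding err_def qq_def by (simp add: sum_distrib_left if_distrib cong: if_cong)
    also have "\<dots> \<le> (\<Sum>ms\<in>Mk. \<Sum>y\<in>Yn. T c ms y)"
    proof (intro sum_mono)
      fix ms y assume ms: "ms \<in> Mk"
      show "(if dec c y \<noteq> ms then qq ms (c ms) y else 0) \<le> T c ms y"
        unfolding T_def
        by (rule dec_bound[OF finM _ ms]) (use qq_nn dec_prop s in auto)
    qed
    finally show ?thesis .
  qed
  have step3: "(\<Sum>c\<in>C. T c ms y) \<le> (Zn y / cX) powr s * (\<Sum>c\<in>C. qq ms (c ms) y powr (1-s))"
    if ms: "ms \<in> Mk" and y: "y \<in> Yn" for ms y
  proof -
    define f where "f c = qq ms (c ms) y powr (1-s)" for c :: "'m list \<Rightarrow> 'x list"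
    define g where "g c = (\<Sum>m'\<in>Mk-{ms}. qq m' (c m') y)" for c :: "'m list \<Rightarrow> 'x list"
    have inner: "(\<Sum>c\<in>C. f c * qq m' (c m') y) = PM m' * ((\<Sum>c\<in>C. f c) * Zn y / cX)"
      if m': "m' \<in> Mk - {ms}" for m'
    proof -
      have "(\<Sum>c\<in>C. f c * Q (ysub y (c m'))) * cX = (\<Sum>c\<in>C. f c) * Zn y"
      proof -
        have ne: "ms \<noteq> m'" and m'M: "m' \<in> Mk" using m' by auto
        have yl: "length y = n" using y by (simp add: Yn_def)
        have Ceq: "C = Pi\<^sub>E Mk (\<lambda>_. {d::'x list. length d = n})" by (simp add: C_def Xn_def)
        show ?thesis unfolding f_def cX_def Zn_def Xn_def
          using shift_C[OF m'M ne yl Ceq, where F="\<lambda>e. qq ms e y powr (1-s)" and Q=Q] by simp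
      qed
      hence h: "(\<Sum>c\<in>C. f c * Q (ysub y (c m'))) = (\<Sum>c\<in>C. f c) * Zn y / cX"
        using cXpos by (simp add: field_simps)
      have "(\<Sum>c\<in>C. f c * qq m' (c m') y) = PM m' * (\<Sum>c\<in>C. f c * Q (ysub y (c m')))"
        by (simp add: qq_def sum_distrib_left mult_ac)
      also have "\<dots> = PM m' * ((\<Sum>c\<in>C. f c) * Zn y / cX)" by (simp only: h)
      finally show ?thesis .
    qed
    have "(\<Sum>c\<in>C. f c * g c) = (\<Sum>m'\<in>Mk-{ms}. \<Sum>c\<in>C. f c * qq m' (c m') y)"
      unfolding g_def by (simp add: sum_distrib_left sum.swap[of _ C])
    also have "\<dots> = (\<Sum>m'\<in>Mk-{ms}. PM m' * ((\<Sum>c\<in>C. f c) * Zn y / cX))"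
      by (rule sum.cong[OF refl inner])
    also have "\<dots> = (\<Sum>m'\<in>Mk-{ms}. PM m') * ((\<Sum>c\<in>C. f c) * Zn y / cX)"
      by (rule sum_distrib_right[symmetric])
    also have "\<dots> \<le> 1 * ((\<Sum>c\<in>C. f c) * Zn y / cX)"
    proof (rule mult_right_mono)
      have "(\<Sum>m'\<in>Mk-{ms}. PM m') \<le> (\<Sum>m'\<in>Mk. PM m')"
        using finM PM by (intro sum_mono2) auto
      thus "(\<Sum>m'\<in>Mk-{ms}. PM m') \<le> 1" using PMs by (simp add: Mk_def)
      show "0 \<le> (\<Sum>c\<in>C. f c) * Zn y / cX"
      proof -
        have "0 \<le> (\<Sum>c\<in>C. f c)" by (simp add: f_def sum_nonneg)
        thus ?thesis using cXpos Zn_nn[of y] by simp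
      qed
    qed
    finally have fg: "(\<Sum>c\<in>C. f c * g c) \<le> Zn y / cX * (\<Sum>c\<in>C. f c)" by (simp add: mult.commute)
    have "(\<Sum>c\<in>C. f c * g c powr s) \<le> (Zn y / cX) powr s * (\<Sum>c\<in>C. f c)"
      by (rule young_avg[OF finC _ _ _ fg s]) (use qq_nn Zn_nn cXpos in \<open>auto simp: f_def g_def intro!: sum_nonneg\<close>)
    thus ?thesis by (simp add: T_def f_def g_def)
  qed
  have shiftY: "(\<Sum>y\<in>Yn. Q (ysub y e) powr (1-s) * (Zn y / cX) powr s) = (\<Sum>y\<in>Yn. Q y powr (1-s) * (Zn y / cX) powr s)"
    if e: "e \<in> Xn" for e
  proof -
    have "(\<Sum>y\<in>Yn. Q (ysub y e) powr (1-s) * (Zn y / cX) powr s)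
        = (\<Sum>y\<in>Yn. Q (ysub y e) powr (1-s) * (Zn (ysub y e) / cX) powr s)"
    proof (rule sum.cong[OF refl])
      fix y assume y: "y \<in> Yn"
      have "Zn (ysub y e) = Zn y" unfolding Zn_def Xn_def
        using Zn_inv[of y n e Q] y e by (simp add: Yn_def Xn_def)
      thus "Q (ysub y e) powr (1-s) * (Zn y / cX) powr s = Q (ysub y e) powr (1-s) * (Zn (ysub y e) / cX) powr s"
        by simp
    qed
    also have "\<dots> = (\<Sum>y\<in>Yn. Q y powr (1-s) * (Zn y / cX) powr s)"
    proof -
      have el: "length e = n" using e by (simp add: Xn_def)
      show ?thesis unfolding Yn_def
        using sum_shift_Y[OF el, where G="\<lambda>y. Q y powr (1-s) * (Zn y / cX) powr s"] by simp
    qed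
    finally show ?thesis .
  qed
  have SC': "(\<Sum>y\<in>Yn. Q y powr (1-s) * (Zn y / cX) powr s) = cX powr (-s) * SC"
    unfolding SC_def using cXpos Zn_nn
    by (simp add: powr_divide powr_minus_divide sum_divide_distrib)
  have "(\<Sum>c\<in>C. err c) \<le> (\<Sum>c\<in>C. \<Sum>ms\<in>Mk. \<Sum>y\<in>Yn. T c ms y)"
    by (intro sum_mono step1)
  also have "\<dots> = (\<Sum>ms\<in>Mk. \<Sum>c\<in>C. \<Sum>y\<in>Yn. T c ms y)"
    by (rule sum.swap)
  also have "\<dots> = (\<Sum>ms\<in>Mk. \<Sum>y\<in>Yn. \<Sum>c\<in>C. T c ms y)"
    by (rule sum.cong[OF refl], rule sum.swap)
  also have "\<dots> \<le> (\<Sum>ms\<in>Mk. \<Sum>y\<in>Yn. (Zn y / cX) powr s * (\<Sum>c\<in>C. qq ms (c ms) y powr (1-s)))"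
    by (intro sum_mono step3)
  also have "\<dots> = (\<Sum>ms\<in>Mk. \<Sum>y\<in>Yn. \<Sum>c\<in>C. PM ms powr (1-s) * (Q (ysub y (c ms)) powr (1-s) * (Zn y / cX) powr s))"
    using PM Q by (simp add: qq_def powr_mult sum_distrib_left mult_ac)
  also have "\<dots> = (\<Sum>ms\<in>Mk. \<Sum>c\<in>C. \<Sum>y\<in>Yn. PM ms powr (1-s) * (Q (ysub y (c ms)) powr (1-s) * (Zn y / cX) powr s))"
    by (rule sum.cong[OF refl], rule sum.swap)
  also have "\<dots> = (\<Sum>c\<in>C. \<Sum>ms\<in>Mk. \<Sum>y\<in>Yn. PM ms powr (1-s) * (Q (ysub y (c ms)) powr (1-s) * (Zn y / cX) powr s))"
    by (rule sum.swap)
  also have "\<dots> = (\<Sum>c\<in>C. \<Sum>ms\<in>Mk. PM ms powr (1-s) * (\<Sum>y\<in>Yn. Q (ysub y (c ms)) powr (1-s) * (Zn y / cX) powr s))"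
    by (simp add: sum_distrib_left)
  also have "\<dots> = (\<Sum>c\<in>C. \<Sum>ms\<in>Mk. PM ms powr (1-s) * (cX powr (-s) * SC))"
    by (intro sum.cong refl) (simp add: shiftY cmem SC')
  also have "\<dots> = real (card C) * (SM * (cX powr (-s) * SC))"
    by (simp add: SM_def sum_distrib_right)
  also have "\<dots> = real (card C) * B"
    by (simp add: B_def mult_ac)
  finally obtain c where c: "c \<in> C" "err c \<le> B" using exists_le_avg[OF finC Cne] by blast
  have len: "\<forall>ms. length ms = k \<longrightarrow> length (c ms) = n"
    using cmem[OF c(1)] by (simp add: Mk_def Xn_def)
  show ?thesis
    apply (rule exI[of _ c])
    apply (rule conjI[OF len])
    apply (rule exI[of _ "dec c"])
    using c(2) unfolding err_def B_def SM_def SC_def Zn_def cX_def Mk_def Xn_def Yn_def .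
qed



lemma sum_pos_nn: "finite A \<Longrightarrow> \<forall>x\<in>A. 0 \<le> f x \<Longrightarrow> \<exists>x\<in>A. 0 < f x \<Longrightarrow> 0 < (sum f A :: real)"
proof -
  assume a: "finite A" "\<forall>x\<in>A. 0 \<le> f x" "\<exists>x\<in>A. 0 < f x"
  then obtain x where x: "x \<in> A" "0 < f x" by blast
  have "f x \<le> sum f A" by (rule member_le_sum) (use a x in auto)
  thus ?thesis using x by simp
qed

lemma sum_pos_iff_nn:
  fixes f :: "'a \<Rightarrow> real"
  assumes "finite A" "\<forall>x\<in>A. 0 \<le> f x"
  shows "0 < sum f A \<longleftrightarrow> (\<exists>x\<in>A. 0 < f x)"
proof
  assume "0 < sum f A"
  hence "sum f A \<noteq> 0" by simp
  hence "\<not> (\<forall>x\<in>A. f x = 0)" using sum_nonneg_eq_0_iff[of A f] assms by auto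
  thus "\<exists>x\<in>A. 0 < f x" using assms(2) by (auto simp: less_le)
next
  assume "\<exists>x\<in>A. 0 < f x"
  thus "0 < sum f A" using sum_pos_nn[OF assms] by blast
qed

lemma pos_mult_nn:
  fixes a b :: real assumes "0 \<le> a" "0 \<le> b" shows "0 < a*b \<longleftrightarrow> 0 < a \<and> 0 < b"
  using assms by (auto simp: zero_less_mult_iff)

lemma mpow_pos_iff:
  fixes A B :: "'a::finite \<Rightarrow> 'a \<Rightarrow> real"
  assumes nA: "\<forall>i j. 0 \<le> A i j" and nB: "\<forall>i j. 0 \<le> B i j" and sup: "\<forall>i j. 0 < A i j \<longleftrightarrow> 0 < B i j"
  shows "0 < mpow A t i j \<longleftrightarrow> 0 < mpow B t i j"
proof (induction t arbitrary: i j)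
  case 0 then show ?case by simp
next
  case (Suc t)
  have "0 < mpow A (Suc t) i j \<longleftrightarrow> (\<exists>l\<in>UNIV. 0 < mpow A t i l * A l j)"
    using sum_pos_iff_nn[of UNIV "\<lambda>l. mpow A t i l * A l j"] mpow_nonneg[OF nA] nA by simp
  also have "\<dots> \<longleftrightarrow> (\<exists>l\<in>UNIV. 0 < mpow A t i l \<and> 0 < A l j)"
    by (simp add: pos_mult_nn mpow_nonneg[OF nA] nA)
  also have "\<dots> \<longleftrightarrow> (\<exists>l\<in>UNIV. 0 < mpow B t i l \<and> 0 < B l j)"
    using Suc sup by simp
  also have "\<dots> \<longleftrightarrow> (\<exists>l\<in>UNIV. 0 < mpow B t i l * B l j)"
    by (simp add: pos_mult_nn mpow_nonneg[OF nB] nB)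
  also have "\<dots> \<longleftrightarrow> 0 < mpow B (Suc t) i j"
    using sum_pos_iff_nn[of UNIV "\<lambda>l. mpow B t i l * B l j"] mpow_nonneg[OF nB] nB by simp
  finally show ?case .
qed

lemma irred_transfer:
  fixes A B :: "'a::finite \<Rightarrow> 'a \<Rightarrow> real"
  assumes "irreducible_mat A" "\<forall>i j. 0 \<le> A i j" "\<forall>i j. 0 \<le> B i j" "\<forall>i j. 0 < A i j \<longleftrightarrow> 0 < B i j"
  shows "irreducible_mat B"
  unfolding irreducible_mat_def
proof (intro allI)
  fix i j
  obtain t where t: "t > 0" "0 < mpow A t i j" using assms(1) unfolding irreducible_mat_def by blast
  have "0 < mpow B t i j" using t(2) mpow_pos_iff[OF assms(2-4), of t i j] by simp
  thus "\<exists>t>0. 0 < mpow B t i j" using t(1) by blast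
qed

lemma chain_sum_one:
  assumes "transition_matrix W"
  shows "(\<Sum>as\<in>{as::'a::finite list. length as = t}. chain_prob W p as) = 1"
proof (induction t arbitrary: p)
  case 0 then show ?case by (simp add: len0)
next
  case (Suc t)
  have "(\<Sum>as\<in>{as::'a list. length as = Suc t}. chain_prob W p as)
      = (\<Sum>a\<in>UNIV. W a p * (\<Sum>as\<in>{as::'a list. length as = t}. chain_prob W a as))"
    by (simp add: sum_lists_Suc sum_distrib_left)
  also have "\<dots> = 1" using Suc assms by (simp add: transition_matrix_def)
  finally show ?case .
qed

lemma markov_sum_one:
  assumes "transition_matrix W" "prob_dist P" "k \<ge> 1"
  shows "(\<Sum>as\<in>{as::'a::finite list. length as = k}. markov_prob P W as) = 1"
proof -
  obtain t where k: "k = Suc t" using assms(3) by (cases k) auto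
  have "(\<Sum>as\<in>{as::'a list. length as = k}. markov_prob P W as)
      = (\<Sum>a\<in>UNIV. P a * (\<Sum>as\<in>{as::'a list. length as = t}. chain_prob W a as))"
    by (simp add: k sum_lists_Suc sum_distrib_left)
  also have "\<dots> = 1" using chain_sum_one[OF assms(1)] assms(2) by (simp add: prob_dist_def)
  finally show ?thesis .
qed

lemma WcZ_ge:
  assumes a1: "assumption1 Wc" and nn: "\<forall>a b. 0 \<le> Wc a b"
  shows "Wc a b \<le> WcZ Wc (snd a) (snd b)"
proof -
  obtain x z x0 z0 where ab: "a = (x,z)" "b = (x0,z0)" by fastforce
  have "Wc (x,z) (x0,z0) \<le> (\<Sum>u\<in>UNIV. Wc (u, z) (x0, z0))"
    by (rule member_le_sum) (use nn in auto)
  also have "\<dots> = WcZ Wc z z0" by (rule WcZ_eq[OF a1])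
  finally show ?thesis by (simp add: ab)
qed

lemma WcZ_nn: "\<forall>a b. 0 \<le> Wc a b \<Longrightarrow> 0 \<le> WcZ Wc z z'"
  unfolding WcZ_def by (simp add: sum_nonneg)

lemma code_error_nn:
  assumes "\<forall>a. 0 \<le> PM1 a" "\<forall>a b. 0 \<le> Ws a b" "\<forall>a. 0 \<le> PXZ1 a" "\<forall>a b. 0 \<le> Wc a b"
  shows "0 \<le> code_error PM1 Ws PXZ1 Wc k n e d"
proof -
  have m1: "\<And>x. 0 \<le> markov_prob PM1 Ws x" using markov_nonneg assms by blast
  have m2: "\<And>x. 0 \<le> markov_prob PXZ1 Wc x" using markov_nonneg assms by blast
  show ?thesis unfolding code_error_def
    by (intro sum_nonneg mult_nonneg_nonneg) (simp_all add: m1 m2)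
qed



theorem mainTheorem9:
  fixes PM1 :: "'m::finite \<Rightarrow> real" and Ws :: "'m \<Rightarrow> 'm \<Rightarrow> real"
    and PXZ1 :: "('x::{ab_group_add,finite} \<times> 'z::finite) \<Rightarrow> real"
    and Wc :: "'x \<times> 'z \<Rightarrow> 'x \<times> 'z \<Rightarrow> real"
    and k n :: nat
  assumes "transition_matrix Ws" "irreducible_mat Ws" "aperiodic_mat Ws" "prob_dist PM1"
    and "transition_matrix Wc" "irreducible_mat Wc" "aperiodic_mat Wc" "prob_dist PXZ1"
    and "assumption1 Wc"
    and "k \<ge> 2" "n \<ge> 2"
  shows "elog (Pj PM1 Ws PXZ1 Wc k n) \<le>
    (INF s\<in>{0<..<1::real}. ereal (- real n * s * ln (real CARD('x))
        + (real n - 1) * U_fn Ws Wc ((real k - 1) / (real n - 1)) s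
        + delta_s PM1 Ws s + delta_c PXZ1 Wc s))"
proof -
  have nWs: "\<forall>a b. 0 \<le> Ws a b" using assms(1) by (simp add: transition_matrix_def)
  have nWc: "\<forall>a b. 0 \<le> Wc a b" using assms(5) by (simp add: transition_matrix_def)
  have nP: "\<forall>a. 0 \<le> PM1 a" using assms(4) by (simp add: prob_dist_def)
  have nPX: "\<forall>a. 0 \<le> PXZ1 a" using assms(8) by (simp add: prob_dist_def)
  have nPZ: "\<forall>z. 0 \<le> PZ1 PXZ1 z" using nPX by (simp add: PZ1_def sum_nonneg)
  have nWZ: "\<forall>z z'. 0 \<le> WcZ Wc z z'" using WcZ_nn[OF nWc] by blast
  have cen: "\<And>e d. 0 \<le> code_error PM1 Ws PXZ1 Wc k n e d" using code_error_nn[OF nP nWs nPX nWc] by blast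
  have Pj_nn: "0 \<le> Pj PM1 Ws PXZ1 Wc k n"
    unfolding Pj_def
  proof (rule cInf_greatest)
    show "{code_error PM1 Ws PXZ1 Wc k n e d | e d. \<forall>ms. length ms = k \<longrightarrow> length (e ms) = n} \<noteq> {}"
    proof -
      have "code_error PM1 Ws PXZ1 Wc k n (\<lambda>ms. replicate n 0) (\<lambda>y. []) \<in> {code_error PM1 Ws PXZ1 Wc k n e d | e d. \<forall>ms. length ms = k \<longrightarrow> length (e ms) = n}"
        by (rule CollectI, rule exI[of _ "\<lambda>ms. replicate n 0"], rule exI[of _ "\<lambda>y. []"]) simp
      thus ?thesis by (metis empty_iff)
    qed
  next
    fix x assume "x \<in> {code_error PM1 Ws PXZ1 Wc k n e d | e d. \<forall>ms. length ms = k \<longrightarrow> length (e ms) = n}"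
    then obtain e d where "x = code_error PM1 Ws PXZ1 Wc k n e d" by blast
    thus "0 \<le> x" using cen by simp
  qed
  have key: "elog (Pj PM1 Ws PXZ1 Wc k n) \<le> ereal (- real n * s * ln (real CARD('x))
        + (real n - 1) * U_fn Ws Wc ((real k - 1) / (real n - 1)) s
        + delta_s PM1 Ws s + delta_c PXZ1 Wc s)" if s: "s \<in> {0<..<1}" for s
  proof -
    from s have s0: "0 < s" and s1: "s < 1" by auto
    define AS where "AS = As Ws s"
    define AC where "AC = Ac Wc s"
    have nAS: "\<forall>a b. 0 \<le> AS a b" by (simp add: AS_def As_def)
    have nAC: "\<forall>a b. 0 \<le> AC a b" by (simp add: AC_def Ac_def)
    have irrAS: "irreducible_mat AS"
    proof (rule irred_transfer[OF assms(2) nWs nAS], intro allI)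
      fix i j
      have "0 \<le> Ws i j" using nWs by simp
      thus "0 < Ws i j \<longleftrightarrow> 0 < AS i j" by (auto simp: AS_def As_def)
    qed
    have irrAC: "irreducible_mat AC"
    proof (rule irred_transfer[OF assms(6) nWc nAC], intro allI)
      fix a b
      have w0: "0 \<le> Wc a b" using nWc by blast
      have wz: "Wc a b \<le> WcZ Wc (snd a) (snd b)" by (rule WcZ_ge[OF assms(9) nWc])
      show "0 < Wc a b \<longleftrightarrow> 0 < AC a b"
      proof
        assume "0 < Wc a b"
        hence "0 < Wc a b powr (1-s)" "0 < WcZ Wc (snd a) (snd b) powr s" using wz by auto
        thus "0 < AC a b" by (simp add: AC_def Ac_def)
      next
        assume "0 < AC a b"
        hence "0 < Wc a b powr (1-s)"
          using nWZ by (simp add: AC_def Ac_def pos_mult_nn)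
        thus "0 < Wc a b" using w0 by (simp add: less_le)
      qed
    qed
    obtain lSpos: "pf_eigval AS > 0" and vS: "\<forall>i. pf_vec AS i \<ge> 1"
      and eS: "\<forall>j. (\<Sum>i\<in>UNIV. pf_vec AS i * AS i j) = pf_eigval AS * pf_vec AS j"
      using pf_props[OF nAS irrAS] by blast
    obtain lCpos: "pf_eigval AC > 0" and vC: "\<forall>i. pf_vec AC i \<ge> 1"
      and eC: "\<forall>j. (\<Sum>i\<in>UNIV. pf_vec AC i * AC i j) = pf_eigval AC * pf_vec AC j"
      using pf_props[OF nAC irrAC] by blast
    define lS where "lS = pf_eigval AS"
    define lC where "lC = pf_eigval AC"
    define DS where "DS = (\<Sum>m\<in>UNIV. pf_vec AS m * PM1 m powr (1-s))"
    define DC where "DC = (\<Sum>a\<in>UNIV. pf_vec AC a * (PXZ1 a powr (1-s) * PZ1 PXZ1 (snd a) powr s))"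
    define cX where "cX = real (card {d::'x list. length d = n})"
    define SM where "SM = (\<Sum>ms\<in>{ms::'m list. length ms = k}. markov_prob PM1 Ws ms powr (1-s))"
    define SC where "SC = (\<Sum>y\<in>{y::('x\<times>'z) list. length y = n}. markov_prob PXZ1 Wc y powr (1-s)
                     * (\<Sum>d\<in>{d::'x list. length d = n}. markov_prob PXZ1 Wc (ysub y d)) powr s)"
    have kS: "Suc (k-1) = k" using assms(10) by simp
    have nS: "Suc (n-1) = n" using assms(11) by simp
    have PMs: "(\<Sum>ms\<in>{ms::'m list. length ms = k}. markov_prob PM1 Ws ms) \<le> 1"
      using markov_sum_one[OF assms(1) assms(4)] assms(10) by simp
    obtain c where len: "\<forall>ms. length ms = k \<longrightarrow> length (c ms) = n" and
      "\<exists>dec. (\<Sum>ms\<in>{ms. length ms = k}. markov_prob PM1 Ws ms * (\<Sum>y\<in>{y. length y = n}.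
           (if dec y \<noteq> ms then markov_prob PXZ1 Wc (ysub y (c ms)) else 0)))
        \<le> cX powr (-s) * SM * SC"
      using random_coding[OF s0 s1, of "markov_prob PM1 Ws" "markov_prob PXZ1 Wc" k n] PMs
        markov_nonneg[OF nP nWs] markov_nonneg[OF nPX nWc]
      unfolding cX_def SM_def SC_def by blast
    then obtain dec where bound: "(\<Sum>ms\<in>{ms. length ms = k}. markov_prob PM1 Ws ms * (\<Sum>y\<in>{y. length y = n}.
           (if dec y \<noteq> ms then markov_prob PXZ1 Wc (ysub y (c ms)) else 0)))
        \<le> cX powr (-s) * SM * SC" by blast
    have "Pj PM1 Ws PXZ1 Wc k n \<le> code_error PM1 Ws PXZ1 Wc k n c dec"
      unfolding Pj_def
    proof (rule cInf_lower)
      show "code_error PM1 Ws PXZ1 Wc k n c dec \<in> {code_error PM1 Ws PXZ1 Wc k n e d | e d. \<forall>ms. length ms = k \<longrightarrow> length (e ms) = n}"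
        by (rule CollectI, rule exI[of _ c], rule exI[of _ dec]) (simp add: len)
      show "bdd_below {code_error PM1 Ws PXZ1 Wc k n e d | e d. \<forall>ms. length ms = k \<longrightarrow> length (e ms) = n}"
      proof (rule bdd_belowI[of _ 0])
        fix x assume "x \<in> {code_error PM1 Ws PXZ1 Wc k n e d | e d. \<forall>ms. length ms = k \<longrightarrow> length (e ms) = n}"
        then obtain e d where "x = code_error PM1 Ws PXZ1 Wc k n e d" by blast
        thus "0 \<le> x" using cen by simp
      qed
    qed
    also have "code_error PM1 Ws PXZ1 Wc k n c dec = (\<Sum>ms\<in>{ms. length ms = k}. markov_prob PM1 Ws ms * (\<Sum>y\<in>{y. length y = n}.
           (if dec y \<noteq> ms then markov_prob PXZ1 Wc (ysub y (c ms)) else 0)))"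
      unfolding code_error_def ysub_def by simp
    also note bound
    finally have Pjb: "Pj PM1 Ws PXZ1 Wc k n \<le> cX powr (-s) * SM * SC" .
    have SMb: "SM \<le> lS^(k-1) * DS"
    proof -
      have eqAS: "(\<lambda>a b. Ws a b powr (1-s)) = AS" by (simp add: AS_def As_def fun_eq_iff)
      have "SM = (\<Sum>ms\<in>{ms::'m list. length ms = Suc (k-1)}. markov_prob (\<lambda>m. PM1 m powr (1-s)) AS ms)"
        unfolding SM_def kS by (simp add: markov_powr[OF nP nWs] eqAS)
      also have "\<dots> \<le> lS^(k-1) * DS" unfolding lS_def DS_def
        by (rule markov_sum_bound[OF nAS vS eS]) (use lSpos in auto)
      finally show ?thesis .
    qed
    have SCb: "SC \<le> lC^(n-1) * DC"
    proof -
      have eqAC: "(\<lambda>a b. Wc a b powr (1-s) * WcZ Wc (snd a) (snd b) powr s) = AC"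
        by (simp add: AC_def Ac_def fun_eq_iff)
      have pt: "markov_prob PXZ1 Wc y powr (1-s) * (\<Sum>d\<in>{d::'x list. length d = n}. markov_prob PXZ1 Wc (ysub y d)) powr s
          = markov_prob (\<lambda>a. PXZ1 a powr (1-s) * PZ1 PXZ1 (snd a) powr s) AC y"
        if y: "y \<in> {y::('x\<times>'z) list. length y = n}" for y
      proof -
        have "(\<Sum>d\<in>{d::'x list. length d = n}. markov_prob PXZ1 Wc (ysub y d)) = markov_prob (PZ1 PXZ1) (WcZ Wc) (map snd y)"
          using markov_marg[OF assms(9)] y by simp
        hence "markov_prob PXZ1 Wc y powr (1-s) * (\<Sum>d\<in>{d::'x list. length d = n}. markov_prob PXZ1 Wc (ysub y d)) powr s
            = markov_prob (\<lambda>a. PXZ1 a powr (1-s)) (\<lambda>a b. Wc a b powr (1-s)) y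
              * markov_prob (\<lambda>z. PZ1 PXZ1 z powr s) (\<lambda>z z'. WcZ Wc z z' powr s) (map snd y)"
          by (simp add: markov_powr[OF nPX nWc] markov_powr[OF nPZ nWZ])
        also have "\<dots> = markov_prob (\<lambda>a. PXZ1 a powr (1-s) * PZ1 PXZ1 (snd a) powr s)
              (\<lambda>a b. Wc a b powr (1-s) * WcZ Wc (snd a) (snd b) powr s) y"
          by (rule markov_prod)
        finally show ?thesis unfolding eqAC .
      qed
      have "SC = (\<Sum>y\<in>{y::('x\<times>'z) list. length y = Suc (n-1)}. markov_prob (\<lambda>a. PXZ1 a powr (1-s) * PZ1 PXZ1 (snd a) powr s) AC y)"
        unfolding SC_def nS by (rule sum.cong[OF refl pt])
      also have "\<dots> \<le> lC^(n-1) * DC" unfolding lC_def DC_def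
        by (rule markov_sum_bound[OF nAC vC eC]) (use lCpos nPX nPZ in auto)
      finally show ?thesis .
    qed
    have N0: "real CARD('x) > 0" by simp
    have cXeq: "cX = real CARD('x) ^ n" unfolding cX_def by (simp add: card_len)
    have cXpos: "cX > 0" using cXeq N0 by simp
    have DSpos: "DS > 0"
    proof -
      obtain m where m: "PM1 m > 0"
      proof -
        have "(\<Sum>a\<in>UNIV. PM1 a) = 1" using assms(4) by (simp add: prob_dist_def)
        hence "0 < (\<Sum>a\<in>UNIV. PM1 a)" by simp
        then obtain m where "0 < PM1 m" using sum_pos_iff_nn[of UNIV PM1] nP by auto
        thus ?thesis using that by blast
      qed
      have pm: "0 < pf_vec AS m * PM1 m powr (1-s)" using vS[rule_format, of m] m by simp
      have nn: "\<forall>x\<in>UNIV. 0 \<le> pf_vec AS x * PM1 x powr (1-s)"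
      proof
        fix x :: 'm have "0 \<le> pf_vec AS x" using vS[rule_format, of x] by linarith
        thus "0 \<le> pf_vec AS x * PM1 x powr (1-s)" by simp
      qed
      show ?thesis unfolding DS_def by (rule sum_pos_nn[OF finite nn]) (use pm in blast)
    qed
    have DCpos: "DC > 0"
    proof -
      obtain a where a: "PXZ1 a > 0"
      proof -
        have "(\<Sum>a\<in>UNIV. PXZ1 a) = 1" using assms(8) by (simp add: prob_dist_def)
        hence "0 < (\<Sum>a\<in>UNIV. PXZ1 a)" by simp
        then obtain a where "0 < PXZ1 a" using sum_pos_iff_nn[of UNIV PXZ1] nPX by auto
        thus ?thesis using that by blast
      qed
      have "PXZ1 a \<le> PZ1 PXZ1 (snd a)"
      proof -
        have "PXZ1 (fst a, snd a) \<le> (\<Sum>x\<in>UNIV. PXZ1 (x, snd a))"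
          by (rule member_le_sum) (use nPX in auto)
        thus ?thesis by (simp add: PZ1_def)
      qed
      hence "0 < PZ1 PXZ1 (snd a)" using a by simp
      hence pm: "0 < pf_vec AC a * (PXZ1 a powr (1-s) * PZ1 PXZ1 (snd a) powr s)"
        using vC[rule_format, of a] a by simp
      have nn: "\<forall>x\<in>UNIV. 0 \<le> pf_vec AC x * (PXZ1 x powr (1-s) * PZ1 PXZ1 (snd x) powr s)"
      proof
        fix x :: "'x \<times> 'z" have "0 \<le> pf_vec AC x" using vC[rule_format, of x] by linarith
        thus "0 \<le> pf_vec AC x * (PXZ1 x powr (1-s) * PZ1 PXZ1 (snd x) powr s)" by simp
      qed
      show ?thesis unfolding DC_def by (rule sum_pos_nn[OF finite nn]) (use pm in blast)
    qed
    have SMnn: "0 \<le> SM" unfolding SM_def by (simp add: sum_nonneg)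
    have SCnn: "0 \<le> SC" unfolding SC_def by (simp add: sum_nonneg)
    define Pst where "Pst = cX powr (-s) * (lS^(k-1) * DS) * (lC^(n-1) * DC)"
    have PjP: "Pj PM1 Ws PXZ1 Wc k n \<le> Pst"
    proof -
      have "cX powr (-s) * SM * SC \<le> cX powr (-s) * (lS^(k-1) * DS) * (lC^(n-1) * DC)"
        using SMb SCb SMnn SCnn by (intro mult_mono mult_left_mono) auto
      thus ?thesis using Pjb unfolding Pst_def by linarith
    qed
    have lSp: "lS > 0" and lCp: "lC > 0" using lSpos lCpos by (simp_all add: lS_def lC_def)
    have lnP: "ln Pst = - s * (real n * ln (real CARD('x))) + real (k-1) * ln lS + ln DS + real (n-1) * ln lC + ln DC"
      unfolding Pst_def using cXpos lSp lCp DSpos DCpos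
      by (simp add: ln_mult ln_realpow cXeq)
    have RHS: "- real n * s * ln (real CARD('x)) + (real n - 1) * U_fn Ws Wc ((real k - 1) / (real n - 1)) s
        + delta_s PM1 Ws s + delta_c PXZ1 Wc s = ln Pst"
    proof -
      have n1: "real n - 1 \<noteq> 0" using assms(11) by simp
      have "(real n - 1) * U_fn Ws Wc ((real k - 1) / (real n - 1)) s = (real k - 1) * ln lS + (real n - 1) * ln lC"
        unfolding U_fn_def thetaH_s_def thetaH_c_def lS_def lC_def AS_def AC_def
        using n1 by (simp add: field_simps)
      moreover have "real (k-1) = real k - 1" "real (n-1) = real n - 1" using assms(10,11) by auto
      ultimately show ?thesis unfolding lnP delta_s_def delta_c_def DS_def DC_def AS_def AC_def
        by (simp add: algebra_simps)
    qed
    show ?thesis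
    proof (cases "Pj PM1 Ws PXZ1 Wc k n = 0")
      case True then show ?thesis by (simp add: elog_def)
    next
      case False
      hence pos: "0 < Pj PM1 Ws PXZ1 Wc k n" using Pj_nn by simp
      have "ln (Pj PM1 Ws PXZ1 Wc k n) \<le> ln Pst" using pos PjP by simp
      thus ?thesis using False RHS by (simp add: elog_def)
    qed
  qed
  show ?thesis by (rule INF_greatest) (rule key)
qed


end
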